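(* Let $I$ be a (finite or infinite) interval of $\mathbb Z$ and $Z=\{(Z^{(t)}_s)_{s\ge t,s\in I}\}_{t\in I}$ a coalescent-walk process on $I$. Define the relation $\le_Z$ on $I$ by: $i\le_Z i$; for $i<j$, $i\le_Z j$ if $Z^{(i)}_j<0$ and $j\le_Z i$ if $Z^{(i)}_j\ge0$. Then $\le_Z$ is a total order on $I$.
   Context: A coalescent-walk process on $I$ is a family $\{(Z^{(t)}_s)_{s\ge t,s\in I}\}_{t\in I}$ of integer-valued walks such that $Z^{(t)}_t=0$ for every $t\in I$, and for $t'\ge t$ in $I$, if $Z^{(t)}_k\ge Z^{(t')}_k$ (resp. $\le$) then $Z^{(t)}_{k'}\ge Z^{(t')}_{k'}$ (resp. $\le$) for every $k'\ge k$. *)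

theory Defs
  imports Main
begin

definition int_interval :: "int set \<Rightarrow> bool" where
  "int_interval I \<longleftrightarrow> (\<forall>a\<in>I. \<forall>c\<in>I. \<forall>b. a \<le> b \<and> b \<le> c \<longrightarrow> b \<in> I)"

text \<open>A coalescent-walk process on I: Z t s is the value at time s of the walk
  started at time t; only values with t, s in I and s >= t are meaningful.\<close>
definition coalescent_walk_process :: "int set \<Rightarrow> (int \<Rightarrow> int \<Rightarrow> int) \<Rightarrow> bool" where
  "coalescent_walk_process I Z \<longleftrightarrow>
     (\<forall>t\<in>I. Z t t = 0) \<and>
     (\<forall>t\<in>I. \<forall>t'\<in>I. \<forall>k\<in>I. t \<le> t' \<and> t' \<le> k \<longrightarrow>
        (Z t k \<ge> Z t' k \<longrightarrow> (\<forall>k'\<in>I. k \<le> k' \<longrightarrow> Z t k' \<ge> Z t' k')) \<and>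
        (Z t k \<le> Z t' k \<longrightarrow> (\<forall>k'\<in>I. k \<le> k' \<longrightarrow> Z t k' \<le> Z t' k')))"

definition cw_le :: "(int \<Rightarrow> int \<Rightarrow> int) \<Rightarrow> int \<Rightarrow> int \<Rightarrow> bool" where
  "cw_le Z i j \<longleftrightarrow> i = j \<or> (i < j \<and> Z i j < 0) \<or> (j < i \<and> Z j i \<ge> 0)"

definition cw_order :: "int set \<Rightarrow> (int \<Rightarrow> int \<Rightarrow> int) \<Rightarrow> int rel" where
  "cw_order I Z = {(i, j). i \<in> I \<and> j \<in> I \<and> cw_le Z i j}"

end

theory Submission
  imports Defs
begin

theorem proposition2p9:
  fixes I :: "int set" and Z :: "int \<Rightarrow> int \<Rightarrow> int"
  assumes "int_interval I"
    and "coalescent_walk_process I Z"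
  shows "linear_order_on I (cw_order I Z)"
proof -
  have Z0: "\<And>t. t \<in> I \<Longrightarrow> Z t t = 0" using assms(2) unfolding coalescent_walk_process_def by blast
  have K1: "Z a c \<le> Z b c" if "a \<in> I" "b \<in> I" "c \<in> I" "a < b" "b < c" "Z a b < 0" for a b c
  proof -
    have "Z a b \<le> Z b b" using Z0 that by simp
    then show ?thesis using assms(2) that unfolding coalescent_walk_process_def
      by (metis order_less_imp_le order_refl)
  qed
  have K2: "Z a c \<ge> Z b c" if "a \<in> I" "b \<in> I" "c \<in> I" "a < b" "b < c" "Z a b \<ge> 0" for a b c
  proof -
    have "Z a b \<ge> Z b b" using Z0 that by simp
    then show ?thesis using assms(2) that unfolding coalescent_walk_process_def
      by (metis order_less_imp_le order_refl)
  qed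
  have tr: "cw_le Z x z" if "x \<in> I" "y \<in> I" "z \<in> I" "cw_le Z x y" "cw_le Z y z" for x y z
  proof -
    consider "x = y" | "y = z" | "x = z" | "x < y" "y < z" | "x < z" "z < y" | "y < x" "x < z"
      | "y < z" "z < x" | "z < x" "x < y" | "z < y" "y < x" by linarith
    then show ?thesis
    proof cases
      case 4 then show ?thesis using that K1[of x y z] K2[of x y z] unfolding cw_le_def by (smt (verit))
    next
      case 5 then show ?thesis using that K1[of x z y] K2[of x z y] unfolding cw_le_def by (smt (verit))
    next
      case 6 then show ?thesis using that K1[of y x z] K2[of y x z] unfolding cw_le_def by (smt (verit))
    next
      case 7 then show ?thesis using that K1[of y z x] K2[of y z x] unfolding cw_le_def by (smt (verit))
    next
      case 8 then show ?thesis using that K1[of z x y] K2[of z x y] unfolding cw_le_def by (smt (verit))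
    next
      case 9 then show ?thesis using that K1[of z y x] K2[of z y x] unfolding cw_le_def by (smt (verit))
    qed (use that in \<open>auto simp: cw_le_def\<close>)
  qed
  show ?thesis
    unfolding linear_order_on_def partial_order_on_def preorder_on_def
  proof (intro conjI)
    show "cw_order I Z \<subseteq> I \<times> I" unfolding cw_order_def by auto
    show "refl_on I (cw_order I Z)" unfolding refl_on_def cw_order_def cw_le_def by auto
    show "trans (cw_order I Z)" unfolding trans_def cw_order_def using tr by blast
    show "antisym (cw_order I Z)" unfolding antisym_def cw_order_def cw_le_def by auto
    show "total_on I (cw_order I Z)" unfolding total_on_def cw_order_def cw_le_def by auto
  qed
qed

end
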